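(* Let $k\ge2$ and $\alpha\in(0,1]$. The moving average cross-over strategy $\mathrm{MA}[k]$ is universalizable both when the long/short allocation function is the line $g_\ell(x)=\frac{x+1}{2}$ and when, on each day $t\ge1$, it is the linear step approximation $g_{(t)}$ (with $g_{(1)}$ used on day $0$), where $g_{(t)}(x)=0$ for $x<-\frac1t$, $g_{(t)}(x)=\frac t2(x+\frac1t)$ for $-\frac1t\le x\le\frac1t$, and $g_{(t)}(x)=1$ for $x>\frac1t$.
   Context: Single-stock trading setting: $m=2$ assets, a long and a short position in one stock, with margin requirement $\alpha\in(0,1]$. On day $t$ the stock price changes by a factor $y_t\in(0,1+\alpha)$, and the return vector is $\mathbf x_t=(y_t,\,1+\frac{1-y_t}{\alpha})\in(0,\infty)^2$. On day $t$ a price-history vector $\mathbf v_t=(v_{t1},\dots,v_{tk})\in(0,1]^k$ is given ($v_{tj}$ the normalized price on day $t-j$). $\mathrm{MA}[k]$ has parameter space $\mathcal W_k^2$, where $\mathcal W_k=\{\mathbf w\in[0,1]^k:\sum_i w_i=1\}$, parameters $(\mathbf w_F,\mathbf w_S)$, and investment description $\mathrm{MA}_t(\mathbf w_F,\mathbf w_S)=\big(g((\mathbf w_F-\mathbf w_S)\cdot\mathbf v_t),\,1-g((\mathbf w_F-\mathbf w_S)\cdot\mathbf v_t)\big)$ for a long/short allocation function $g:[-1,1]\to[0,1]$. General notions: for an investment strategy $S$ with parameter space $\mathbb W=\mathcal W_k^\ell$ and descriptions $S_t(\mathbf w)\in\mathcal W_m$, $\mathcal R_n(S(\mathbf w))=\prod_{t=0}^{n-1}S_t(\mathbf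 w)\cdot\mathbf x_t$ ($\mathcal R_0\equiv1$), $\mathcal L_n=\frac1n\log\mathcal R_n$; for parameter-free $U$, $\mathcal R_n(U)=\prod_{t<n}U_t\cdot\mathbf x_t$, $\mathcal L_n(U)=\frac1n\log\mathcal R_n(U)$. $\mu$ is the uniform probability measure on $\mathbb W$ and $\mathcal U(S)$ is the strategy with $\mathcal U_t(S)=\int_{\mathbb W}S_t\mathcal R_t\,d\mu/\int_{\mathbb W}\mathcal R_t\,d\mu$. $U$ is a universalization of $S$ if there is $\eta_n\to0$, independent of market data, with $\mathcal L_n(U)\ge\sup_{\mathbf w}\mathcal L_n(S(\mathbf w))-\eta_n$ for all $n$ and all market data. For $\varepsilon\in(0,1)$ the $\varepsilon$-modification is $\bar S_t(\mathbf w)=(1-\frac{\varepsilon}{2(t+1)^2})S_t(\mathbf w)+\frac{\varepsilon}{2m(t+1)^2}(1,\dots,1)$. $S$ is universalizable if for every $\varepsilon\in(0,1)$, $\mathcal U(\bar S)$ is a universalization of $S$. *)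

theory Defs
  imports "HOL-Analysis.Analysis"
begin

(* Portfolios / return vectors for m = 2 assets are pairs (long, short). *)
definition ret :: "real \<times> real \<Rightarrow> real \<times> real \<Rightarrow> real" where
  "ret p x = fst p * fst x + snd p * snd x"

definition wealth :: "(nat \<Rightarrow> real \<times> real) \<Rightarrow> (nat \<Rightarrow> real \<times> real) \<Rightarrow> nat \<Rightarrow> real" where
  "wealth U x n = (\<Prod>t<n. ret (U t) (x t))"

definition growth :: "(nat \<Rightarrow> real \<times> real) \<Rightarrow> (nat \<Rightarrow> real \<times> real) \<Rightarrow> nat \<Rightarrow> real" where
  "growth U x n = ln (wealth U x n) / real n"

definition univ_strategy ::
  "'p measure \<Rightarrow> (nat \<Rightarrow> 'p \<Rightarrow> real \<times> real) \<Rightarrow> (nat \<Rightarrow> real \<times> real) \<Rightarrow> nat \<Rightarrow> real \<times> real" where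
  "univ_strategy \<mu> S x t =
     (let Z = (\<integral>w. wealth (\<lambda>s. S s w) x t \<partial>\<mu>)
      in ((\<integral>w. fst (S t w) * wealth (\<lambda>s. S s w) x t \<partial>\<mu>) / Z,
          (\<integral>w. snd (S t w) * wealth (\<lambda>s. S s w) x t \<partial>\<mu>) / Z))"

definition eps_mod :: "real \<Rightarrow> (nat \<Rightarrow> 'p \<Rightarrow> real \<times> real) \<Rightarrow> nat \<Rightarrow> 'p \<Rightarrow> real \<times> real" where
  "eps_mod \<epsilon> S t w =
     (let c = \<epsilon> / (2 * (real t + 1)^2)
      in ((1 - c) * fst (S t w) + c / 2, (1 - c) * snd (S t w) + c / 2))"

(* U is a universalization of S: D = admissible market data, X d = return vectors,
   W = parameter space, S d t w = investment description. eta independent of data. *)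
definition universalization ::
  "'d set \<Rightarrow> ('d \<Rightarrow> nat \<Rightarrow> real \<times> real) \<Rightarrow> 'p set \<Rightarrow> ('d \<Rightarrow> nat \<Rightarrow> 'p \<Rightarrow> real \<times> real)
     \<Rightarrow> ('d \<Rightarrow> nat \<Rightarrow> real \<times> real) \<Rightarrow> bool" where
  "universalization D X W S U \<longleftrightarrow>
     (\<exists>\<eta>::nat \<Rightarrow> real. \<eta> \<longlonglongrightarrow> 0 \<and>
        (\<forall>d\<in>D. \<forall>n\<ge>1. growth (U d) (X d) n \<ge> (SUP w\<in>W. growth (\<lambda>t. S d t w) (X d) n) - \<eta> n))"

definition universalizable ::
  "'d set \<Rightarrow> ('d \<Rightarrow> nat \<Rightarrow> real \<times> real) \<Rightarrow> 'p set \<Rightarrow> 'p measure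
     \<Rightarrow> ('d \<Rightarrow> nat \<Rightarrow> 'p \<Rightarrow> real \<times> real) \<Rightarrow> bool" where
  "universalizable D X W \<mu> S \<longleftrightarrow>
     (\<forall>\<epsilon>. 0 < \<epsilon> \<and> \<epsilon> < 1 \<longrightarrow>
        universalization D X W S (\<lambda>d. univ_strategy \<mu> (eps_mod \<epsilon> (S d)) (X d)))"

(* W_k, coordinates indexed 0..<k (standing for 1..k), zero outside *)
definition Wk :: "nat \<Rightarrow> (nat \<Rightarrow> real) set" where
  "Wk k = {w. (\<forall>i<k. 0 \<le> w i \<and> w i \<le> 1) \<and> (\<forall>i\<ge>k. w i = 0) \<and> (\<Sum>i<k. w i) = 1}"

(* chart: first k-1 coordinates *)
definition lower_simplex :: "nat \<Rightarrow> (nat \<Rightarrow> real) set" where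
  "lower_simplex k = {u \<in> space (Pi\<^sub>M {..<k-1} (\<lambda>_. lborel)).
      (\<forall>i<k-1. 0 \<le> u i) \<and> (\<Sum>i<k-1. u i) \<le> 1}"

definition lift_simplex :: "nat \<Rightarrow> (nat \<Rightarrow> real) \<Rightarrow> nat \<Rightarrow> real" where
  "lift_simplex k u = (\<lambda>i. if i < k - 1 then u i
                          else if i = k - 1 then 1 - (\<Sum>j<k-1. u j) else 0)"

(* uniform probability measure on W_k: image of the normalized Lebesgue measure on
   the (k-1)-dimensional chart under the affine bijection onto W_k *)
definition simplex_uniform :: "nat \<Rightarrow> (nat \<Rightarrow> real) measure" where
  "simplex_uniform k =
     distr (uniform_measure (Pi\<^sub>M {..<k-1} (\<lambda>_. lborel)) (lower_simplex k))
           (Pi\<^sub>M UNIV (\<lambda>_. borel)) (lift_simplex k)"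

definition param_uniform :: "nat \<Rightarrow> ((nat \<Rightarrow> real) \<times> (nat \<Rightarrow> real)) measure" where
  "param_uniform k = simplex_uniform k \<Otimes>\<^sub>M simplex_uniform k"

(* market data: (y, v), y t = price factor on day t, v t j = v_{t,j+1} *)
definition market_data :: "nat \<Rightarrow> real \<Rightarrow> ((nat \<Rightarrow> real) \<times> (nat \<Rightarrow> nat \<Rightarrow> real)) set" where
  "market_data k \<alpha> = {(y, v). (\<forall>t. 0 < y t \<and> y t < 1 + \<alpha>) \<and>
                               (\<forall>t j. j < k \<longrightarrow> 0 < v t j \<and> v t j \<le> 1)}"

definition ls_returns :: "real \<Rightarrow> (nat \<Rightarrow> real) \<times> (nat \<Rightarrow> nat \<Rightarrow> real) \<Rightarrow> nat \<Rightarrow> real \<times> real" where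
  "ls_returns \<alpha> d t = (fst d t, 1 + (1 - fst d t) / \<alpha>)"

definition MA :: "nat \<Rightarrow> (nat \<Rightarrow> real \<Rightarrow> real) \<Rightarrow> (nat \<Rightarrow> real) \<times> (nat \<Rightarrow> nat \<Rightarrow> real)
     \<Rightarrow> nat \<Rightarrow> (nat \<Rightarrow> real) \<times> (nat \<Rightarrow> real) \<Rightarrow> real \<times> real" where
  "MA k G d t w =
     (let s = (\<Sum>j<k. (fst w j - snd w j) * snd d t j)
      in (G t s, 1 - G t s))"

definition g_line :: "real \<Rightarrow> real" where
  "g_line x = (x + 1) / 2"

definition g_step :: "nat \<Rightarrow> real \<Rightarrow> real" where
  "g_step n x = (if x < - 1 / real n then 0
                 else if x \<le> 1 / real n then real n / 2 * (x + 1 / real n) else 1)"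

end

theory Submission
  imports Defs "HOL-Probability.Probability"
begin


lemma scale_PiM:
  fixes c :: "nat \<Rightarrow> real" and l :: real and m :: nat
  assumes l: "l > 0"
  shows "PiM {..<m} (\<lambda>_. lborel) = density (distr (PiM {..<m} (\<lambda>_. lborel)) (PiM {..<m} (\<lambda>_. lborel))
            (\<lambda>u. \<lambda>i\<in>{..<m}. c i + l * u i)) (\<lambda>_. ennreal (l^m))"
proof -
  interpret product_sigma_finite "\<lambda>_::nat. lborel::real measure"
    by (simp add: product_sigma_finite_def lborel.sigma_finite_measure_axioms)
  let ?P = "PiM {..<m} (\<lambda>_. lborel::real measure)"
  let ?psi = "\<lambda>u. \<lambda>i\<in>{..<m}. c i + l * u i"
  have meas: "?psi \<in> measurable ?P ?P"
    by measurable
  show ?thesis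
  proof (rule sym, rule PiM_eqI)
    fix A :: "nat \<Rightarrow> real set" assume A: "\<And>i. i \<in> {..<m} \<Longrightarrow> A i \<in> sets lborel"
    have inA: "Pi\<^sub>E {..<m} A \<in> sets ?P"
      using A by (intro sets_PiM_I_finite) auto
    have pre: "?psi -` Pi\<^sub>E {..<m} A \<inter> space ?P = Pi\<^sub>E {..<m} (\<lambda>i. (\<lambda>x. c i + l * x) -` A i)"
      by (auto simp: space_PiM PiE_def Pi_def extensional_def)
    have pb: "(\<lambda>x. c i + l * x) -` A i \<in> sets borel" if "i < m" for i
    proof -
      have "(\<lambda>x::real. c i + l * x) \<in> borel_measurable borel" by measurable
      from measurable_sets[OF this, of "A i"] A[of i] that show ?thesis by simp
    qed
    have e1: "emeasure lborel (A i) = ennreal l * emeasure lborel ((\<lambda>x. c i + l * x) -` A i)" if "i < m" for i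
    proof -
      have "emeasure lborel (A i) = emeasure (density (distr lborel borel (\<lambda>x. c i + l * x)) (\<lambda>_. ennreal \<bar>l\<bar>)) (A i)"
        using lborel_real_affine[of l "c i"] l by simp
      also have "\<dots> = ennreal l * emeasure lborel ((\<lambda>x. c i + l * x) -` A i)"
        using A[of i] that l by (simp add: emeasure_density_const emeasure_distr)
      finally show ?thesis .
    qed
    have "emeasure (density (distr ?P ?P ?psi) (\<lambda>_. ennreal (l^m))) (Pi\<^sub>E {..<m} A)
        = ennreal (l^m) * emeasure ?P (?psi -` Pi\<^sub>E {..<m} A \<inter> space ?P)"
      using inA meas by (simp add: emeasure_density_const emeasure_distr)
    also have "\<dots> = ennreal (l^m) * (\<Prod>i<m. emeasure lborel ((\<lambda>x. c i + l * x) -` A i))"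
      unfolding pre using A pb by (subst emeasure_PiM) auto
    also have "\<dots> = (\<Prod>i<m. ennreal l * emeasure lborel ((\<lambda>x. c i + l * x) -` A i))"
      using l by (simp add: prod.distrib ennreal_power)
    also have "\<dots> = (\<Prod>i<m. emeasure lborel (A i))"
      using e1 by (intro prod.cong) auto
    finally show "emeasure (density (distr ?P ?P ?psi) (\<lambda>_. ennreal (l^m))) (Pi\<^sub>E {..<m} A) = (\<Prod>i\<in>{..<m}. emeasure lborel (A i))" .
  qed simp_all
qed

lemma scale_nn:
  fixes c :: "nat \<Rightarrow> real" and l :: real and m :: nat
  assumes l: "l > 0" and h: "h \<in> borel_measurable (PiM {..<m} (\<lambda>_. lborel::real measure))"
  shows "(\<integral>\<^sup>+u. h u \<partial>PiM {..<m} (\<lambda>_. lborel)) = ennreal (l^m) * (\<integral>\<^sup>+u. h (\<lambda>i\<in>{..<m}. c i + l * u i) \<partial>PiM {..<m} (\<lambda>_. lborel))"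
proof -
  let ?P = "PiM {..<m} (\<lambda>_. lborel::real measure)"
  let ?psi = "\<lambda>u. \<lambda>i\<in>{..<m}. c i + l * u i"
  have meas: "?psi \<in> measurable ?P ?P"
    by measurable
  have eq: "?P = density (distr ?P ?P ?psi) (\<lambda>_. ennreal (l^m))"
    by (rule scale_PiM[OF l])
  have "integral\<^sup>N ?P h = integral\<^sup>N (density (distr ?P ?P ?psi) (\<lambda>_. ennreal (l^m))) h"
    using eq by (rule arg_cong)
  also have "\<dots> = (\<integral>\<^sup>+u. ennreal (l^m) * h u \<partial>distr ?P ?P ?psi)"
    using h by (subst nn_integral_density) auto
  also have "\<dots> = (\<integral>\<^sup>+u. ennreal (l^m) * h (?psi u) \<partial>?P)"
    using h meas by (subst nn_integral_distr) auto
  also have "\<dots> = ennreal (l^m) * (\<integral>\<^sup>+u. h (?psi u) \<partial>?P)"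
    using h meas by (subst nn_integral_cmult) auto
  finally show ?thesis .
qed

interpretation lb: product_sigma_finite "\<lambda>_::nat. lborel::real measure"
  by (simp add: product_sigma_finite_def lborel.sigma_finite_measure_axioms)

definition phi :: "real \<Rightarrow> (nat \<Rightarrow> real) \<Rightarrow> (nat \<Rightarrow> real) \<Rightarrow> nat \<Rightarrow> real" where
  "phi l a x = (\<lambda>i. (1 - l) * a i + l * x i)"

definition Wp :: "nat \<Rightarrow> (nat \<Rightarrow> real) set" where
  "Wp k = {w. (\<forall>i\<in>{..<k}. 0 \<le> w i \<and> w i \<le> 1) \<and> (\<Sum>i<k. w i) = 1}"

lemma lower_simplex_sets: "lower_simplex k \<in> sets (PiM {..<k-1} (\<lambda>_. lborel))"
proof -
  have "{u\<in>space (PiM {..<k-1} (\<lambda>_. lborel::real measure)). (\<forall>i\<in>{..<k-1}. 0 \<le> u i) \<and> (\<Sum>i<k-1. u i) \<le> 1}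
     \<in> sets (PiM {..<k-1} (\<lambda>_. lborel))"
    by measurable
  then show ?thesis unfolding lower_simplex_def by simp
qed

lemma lift_meas: "lift_simplex k \<in> measurable (PiM {..<k-1} (\<lambda>_. lborel)) (PiM UNIV (\<lambda>_. borel))"
  unfolding lift_simplex_def
proof (rule measurable_PiM_single')
  fix i :: nat
  show "(\<lambda>u. if i < k - 1 then u i else if i = k - 1 then 1 - (\<Sum>j<k-1. u j) else 0)
      \<in> measurable (PiM {..<k-1} (\<lambda>_. lborel)) borel"
  proof (cases "i < k - 1")
    case True
    then show ?thesis by simp
  next
    case False
    then show ?thesis by simp
  qed
qed (auto simp: space_PiM)

lemma phi_meas: "phi l a \<in> measurable (PiM UNIV (\<lambda>_. borel)) (PiM UNIV (\<lambda>_. borel))"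
  unfolding phi_def by (rule measurable_PiM_single') (auto simp: space_PiM)

lemma Wp_sets: "{x \<in> space (PiM UNIV (\<lambda>_. borel)). x \<in> Wp k} \<in> sets (PiM UNIV (\<lambda>_. borel::real measure))"
  unfolding Wp_def by measurable

lemma S_fin: "emeasure (PiM {..<k-1} (\<lambda>_. lborel)) (lower_simplex k) \<le> 1"
proof -
  let ?P = "PiM {..<k-1} (\<lambda>_. lborel::real measure)"
  have sub: "lower_simplex k \<subseteq> Pi\<^sub>E {..<k-1} (\<lambda>_. {0..1})"
  proof
    fix u assume u: "u \<in> lower_simplex k"
    then have sp: "u \<in> Pi\<^sub>E {..<k-1} (\<lambda>_. UNIV)" and nn: "\<forall>i<k-1. 0 \<le> u i" and s1: "(\<Sum>i<k-1. u i) \<le> 1"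
      by (auto simp: lower_simplex_def space_PiM)
    have "u i \<le> 1" if "i < k - 1" for i
    proof -
      have "u i \<le> (\<Sum>i<k-1. u i)" using that nn by (intro member_le_sum) auto
      then show ?thesis using s1 by simp
    qed
    then show "u \<in> Pi\<^sub>E {..<k-1} (\<lambda>_. {0..1})" using sp nn by (auto simp: PiE_def Pi_def)
  qed
  have "emeasure ?P (lower_simplex k) \<le> emeasure ?P (Pi\<^sub>E {..<k-1} (\<lambda>_. {0..1}))"
    by (rule emeasure_mono[OF sub]) (auto intro!: sets_PiM_I_finite)
  also have "\<dots> = 1"
    by (subst lb.emeasure_PiM) auto
  finally show ?thesis .
qed

lemma S_pos:
  assumes "k \<ge> 2"
  shows "emeasure (PiM {..<k-1} (\<lambda>_. lborel)) (lower_simplex k) \<noteq> 0"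
proof -
  let ?P = "PiM {..<k-1} (\<lambda>_. lborel::real measure)"
  define m where "m = k - 1"
  have m: "m > 0" using assms by (simp add: m_def)
  have sub: "Pi\<^sub>E {..<m} (\<lambda>_. {0..1/real m}) \<subseteq> lower_simplex k"
  proof
    fix u assume u: "u \<in> Pi\<^sub>E {..<m} (\<lambda>_. {0..1/real m})"
    have "(\<Sum>i<m. u i) \<le> (\<Sum>i<m. 1/real m)"
      using u by (intro sum_mono) (auto simp: PiE_def Pi_def)
    also have "\<dots> = 1" using m by simp
    finally show "u \<in> lower_simplex k"
      using u by (auto simp: lower_simplex_def space_PiM m_def PiE_def Pi_def)
  qed
  have "emeasure ?P (Pi\<^sub>E {..<m} (\<lambda>_. {0..1/real m})) = (\<Prod>i<m. ennreal (1/real m))"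
    using lb.emeasure_PiM[of "{..<m}" "\<lambda>_. {0..1/real m}"] by (simp add: m_def)
  also have "\<dots> > 0" using m by (simp, subst ennreal_power) auto
  finally have "0 < emeasure ?P (Pi\<^sub>E {..<m} (\<lambda>_. {0..1/real m}))" .
  also have "\<dots> \<le> emeasure ?P (lower_simplex k)"
    by (rule emeasure_mono[OF sub lower_simplex_sets])
  finally show ?thesis by simp
qed

lemma sets_Q: "sets (uniform_measure M A) = sets M"
  by (simp add: uniform_measure_def)

lemma lift_measQ: "lift_simplex k \<in> measurable (uniform_measure (PiM {..<k-1} (\<lambda>_. lborel)) (lower_simplex k)) (PiM UNIV (\<lambda>_. borel))"
  using lift_meas measurable_cong_sets[OF sets_Q refl] by blast

lemma mu1_prob: "k \<ge> 2 \<Longrightarrow> prob_space (simplex_uniform k)"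
proof -
  assume k: "k \<ge> 2"
  have "emeasure (PiM {..<k-1} (\<lambda>_. lborel)) (lower_simplex k) < \<top>"
    using S_fin[of k] by (rule le_less_trans) simp
  then have "prob_space (uniform_measure (PiM {..<k-1} (\<lambda>_. lborel)) (lower_simplex k))"
    using S_pos[OF k] by (intro prob_space_uniform_measure) auto
  then show ?thesis
    unfolding simplex_uniform_def by (rule prob_space.prob_space_distr[OF _ lift_measQ])
qed

lemma mu1_sets: "sets (simplex_uniform k) = sets (PiM UNIV (\<lambda>_. borel))"
  by (simp add: simplex_uniform_def)

lemma lift_Wp:
  assumes u: "u \<in> lower_simplex k" and k: "k \<ge> 1"
  shows "lift_simplex k u \<in> Wp k"
proof -
  define m where "m = k - 1"
  have km: "k = Suc m" using k by (simp add: m_def)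
  have nn: "\<forall>i<m. 0 \<le> u i" and s1: "(\<Sum>i<m. u i) \<le> 1"
    using u by (auto simp: lower_simplex_def m_def)
  have le: "u i \<le> 1" if "i < m" for i
  proof -
    have "u i \<le> (\<Sum>i<m. u i)" using that nn by (intro member_le_sum) auto
    then show ?thesis using s1 by simp
  qed
  have s0: "0 \<le> (\<Sum>i<m. u i)" using nn by (intro sum_nonneg) auto
  have L: "lift_simplex k u i = (if i < m then u i else if i = m then 1 - (\<Sum>j<m. u j) else 0)" for i
    by (simp add: lift_simplex_def m_def)
  have "(\<Sum>i<k. lift_simplex k u i) = (\<Sum>i<m. lift_simplex k u i) + lift_simplex k u m"
    by (simp add: km)
  also have "(\<Sum>i<m. lift_simplex k u i) = (\<Sum>i<m. u i)"
    by (intro sum.cong) (auto simp: L)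
  finally have "(\<Sum>i<k. lift_simplex k u i) = 1" by (simp add: L)
  moreover have "0 \<le> lift_simplex k u i \<and> lift_simplex k u i \<le> 1" if "i < k" for i
  proof -
    have "i < m \<or> i = m" using that km by auto
    then show ?thesis using nn le s0 s1 by (auto simp: L)
  qed
  ultimately show ?thesis by (auto simp: Wp_def)
qed

lemma mu1_AE:
  assumes k: "k \<ge> 2"
  shows "AE x in simplex_uniform k. x \<in> Wp k"
  unfolding simplex_uniform_def
  apply (subst AE_distr_iff[OF lift_measQ])
  using Wp_sets sets_Q apply simp
  apply (rule AE_uniform_measureI[OF lower_simplex_sets])
  using lift_Wp k by (intro AE_I2) auto

lemma Wk_sum_lower:
  assumes a: "a \<in> Wk k" and k: "k \<ge> 1"
  shows "a (k-1) = 1 - (\<Sum>j<k-1. a j)" and "(\<Sum>j<k-1. a j) \<le> 1"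
proof -
  have km: "k = Suc (k-1)" using k by simp
  have "1 = (\<Sum>j<k. a j)" using a by (simp add: Wk_def)
  also have "\<dots> = (\<Sum>j<k-1. a j) + a (k-1)" by (subst km) simp
  finally show "a (k-1) = 1 - (\<Sum>j<k-1. a j)" by simp
  moreover have "a (k-1) \<ge> 0" using a k by (simp add: Wk_def)
  ultimately show "(\<Sum>j<k-1. a j) \<le> 1" by simp
qed

lemma lift_psi:
  assumes a: "a \<in> Wk k" and k: "k \<ge> 1"
  shows "lift_simplex k (\<lambda>i\<in>{..<k-1}. (1-l) * a i + l * u i) = phi l a (lift_simplex k u)"
proof
  fix i
  show "lift_simplex k (\<lambda>i\<in>{..<k-1}. (1-l) * a i + l * u i) i = phi l a (lift_simplex k u) i"
  proof (cases "i < k - 1")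
    case True
    then show ?thesis by (simp add: lift_simplex_def phi_def)
  next
    case False
    show ?thesis
    proof (cases "i = k - 1")
      case True
      have se: "(\<Sum>j<k-1. (\<lambda>i\<in>{..<k-1}. (1-l) * a i + l * u i) j) = (1-l) * (\<Sum>j<k-1. a j) + l * (\<Sum>j<k-1. u j)"
        by (simp add: sum.distrib sum_distrib_left)
      have "lift_simplex k (\<lambda>i\<in>{..<k-1}. (1-l) * a i + l * u i) i = 1 - (\<Sum>j<k-1. (\<lambda>i\<in>{..<k-1}. (1-l) * a i + l * u i) j)"
        using True by (simp add: lift_simplex_def)
      also have "\<dots> = 1 - ((1-l) * (\<Sum>j<k-1. a j) + l * (\<Sum>j<k-1. u j))"
        by (simp only: se)
      also have "\<dots> = (1-l) * a (k-1) + l * (1 - (\<Sum>j<k-1. u j))"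
        unfolding Wk_sum_lower(1)[OF a k] by (simp add: algebra_simps)
      also have "\<dots> = phi l a (lift_simplex k u) i"
        using True by (simp add: lift_simplex_def phi_def)
      finally show ?thesis .
    next
      case False2: False
      then have "i \<ge> k" using False by simp
      then have "a i = 0" using a by (simp add: Wk_def)
      then show ?thesis using False False2 by (simp add: lift_simplex_def phi_def)
    qed
  qed
qed

lemma psi_S:
  assumes a: "a \<in> Wk k" and k: "k \<ge> 1" and l: "0 < l" "l \<le> 1" and u: "u \<in> lower_simplex k"
  shows "(\<lambda>i\<in>{..<k-1}. (1-l) * a i + l * u i) \<in> lower_simplex k"
proof -
  have nn: "\<forall>i<k-1. 0 \<le> u i" and s1: "(\<Sum>i<k-1. u i) \<le> 1"
    using u by (auto simp: lower_simplex_def)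
  have an: "0 \<le> a i" if "i < k - 1" for i using a that by (simp add: Wk_def)
  have "(\<Sum>j<k-1. (\<lambda>i\<in>{..<k-1}. (1-l) * a i + l * u i) j) = (1-l) * (\<Sum>j<k-1. a j) + l * (\<Sum>j<k-1. u j)"
    by (simp add: sum.distrib sum_distrib_left)
  also have "\<dots> \<le> (1-l) * 1 + l * 1"
    using Wk_sum_lower(2)[OF a k] s1 l by (intro add_mono mult_left_mono) auto
  finally have "(\<Sum>j<k-1. (\<lambda>i\<in>{..<k-1}. (1-l) * a i + l * u i) j) \<le> 1" by simp
  moreover have "\<forall>i<k-1. 0 \<le> (\<lambda>i\<in>{..<k-1}. (1-l) * a i + l * u i) i"
    using nn an l by auto
  ultimately show ?thesis
    by (auto simp: lower_simplex_def space_PiM PiE_def extensional_def)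
qed

lemma F4:
  assumes k: "k \<ge> 2" and a: "a \<in> Wk k" and l: "0 < l" "l \<le> 1"
    and h: "h \<in> borel_measurable (PiM UNIV (\<lambda>_. borel))"
  shows "ennreal (l^(k-1)) * (\<integral>\<^sup>+x. h (phi l a x) \<partial>simplex_uniform k) \<le> (\<integral>\<^sup>+x. h x \<partial>simplex_uniform k)"
proof -
  let ?P = "PiM {..<k-1} (\<lambda>_. lborel::real measure)"
  let ?S = "lower_simplex k"
  let ?psi = "\<lambda>u. \<lambda>i\<in>{..<k-1}. (1-l) * a i + l * u i"
  define H where "H u = h (lift_simplex k u) * indicator ?S u" for u
  have Ssets[measurable]: "?S \<in> sets ?P" by (rule lower_simplex_sets)
  have liftm[measurable]: "lift_simplex k \<in> measurable ?P (PiM UNIV (\<lambda>_. borel))" by (rule lift_meas)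
  have phim[measurable]: "phi l a \<in> measurable (PiM UNIV (\<lambda>_. borel)) (PiM UNIV (\<lambda>_. borel))" by (rule phi_meas)
  have hm[measurable]: "h \<in> borel_measurable (PiM UNIV (\<lambda>_. borel))" by (rule h)
  have Hm: "H \<in> borel_measurable ?P" unfolding H_def by measurable
  have "(\<integral>\<^sup>+x. h x \<partial>simplex_uniform k) = (\<integral>\<^sup>+u. h (lift_simplex k u) \<partial>uniform_measure ?P ?S)"
    unfolding simplex_uniform_def by (rule nn_integral_distr[OF lift_measQ]) simp
  also have "\<dots> = (\<integral>\<^sup>+u. H u \<partial>?P) / emeasure ?P ?S"
    unfolding H_def by (rule nn_integral_uniform_measure) measurable
  finally have e1: "(\<integral>\<^sup>+x. h x \<partial>simplex_uniform k) = (\<integral>\<^sup>+u. H u \<partial>?P) / emeasure ?P ?S" .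
  have "(\<integral>\<^sup>+x. h (phi l a x) \<partial>simplex_uniform k) = (\<integral>\<^sup>+u. h (phi l a (lift_simplex k u)) \<partial>uniform_measure ?P ?S)"
    unfolding simplex_uniform_def by (rule nn_integral_distr[OF lift_measQ]) simp
  also have "\<dots> = (\<integral>\<^sup>+u. h (phi l a (lift_simplex k u)) * indicator ?S u \<partial>?P) / emeasure ?P ?S"
    by (rule nn_integral_uniform_measure) measurable
  finally have e2: "(\<integral>\<^sup>+x. h (phi l a x) \<partial>simplex_uniform k) = (\<integral>\<^sup>+u. h (phi l a (lift_simplex k u)) * indicator ?S u \<partial>?P) / emeasure ?P ?S" .
  have mono: "(\<integral>\<^sup>+u. h (phi l a (lift_simplex k u)) * indicator ?S u \<partial>?P) \<le> (\<integral>\<^sup>+u. H (?psi u) \<partial>?P)"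
  proof (rule nn_integral_mono)
    fix u assume "u \<in> space ?P"
    show "h (phi l a (lift_simplex k u)) * indicator ?S u \<le> H (?psi u)"
    proof (cases "u \<in> ?S")
      case True
      then show ?thesis using psi_S[OF a _ l True] lift_psi[OF a, of l u] k
        by (simp add: H_def)
    qed simp
  qed
  have sc: "(\<integral>\<^sup>+u. H u \<partial>?P) = ennreal (l^(k-1)) * (\<integral>\<^sup>+u. H (?psi u) \<partial>?P)"
    using scale_nn[OF l(1) Hm, of "\<lambda>i. (1-l) * a i"] by simp
  have "ennreal (l^(k-1)) * (\<integral>\<^sup>+x. h (phi l a x) \<partial>simplex_uniform k)
      = ennreal (l^(k-1)) * (\<integral>\<^sup>+u. h (phi l a (lift_simplex k u)) * indicator ?S u \<partial>?P) / emeasure ?P ?S"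
    unfolding e2 by (rule ennreal_times_divide)
  also have "\<dots> \<le> ennreal (l^(k-1)) * (\<integral>\<^sup>+u. H (?psi u) \<partial>?P) / emeasure ?P ?S"
    by (intro divide_right_mono_ennreal mult_left_mono mono) simp
  also have "\<dots> = (\<integral>\<^sup>+x. h x \<partial>simplex_uniform k)"
    unfolding e1 sc ..
  finally show ?thesis .
qed

lemma mu_prob: "k \<ge> 2 \<Longrightarrow> prob_space (param_uniform k)"
  unfolding param_uniform_def by (intro prob_space_pair mu1_prob)

lemma mu_sets: "sets (param_uniform k) = sets (PiM UNIV (\<lambda>_. borel::real measure) \<Otimes>\<^sub>M PiM UNIV (\<lambda>_. borel::real measure))"
  unfolding param_uniform_def by (intro sets_pair_measure_cong mu1_sets)

lemma mu_AE:
  assumes k: "k \<ge> 2"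
  shows "AE w in param_uniform k. fst w \<in> Wp k \<and> snd w \<in> Wp k"
proof -
  interpret M1: prob_space "simplex_uniform k" by (rule mu1_prob[OF k])
  interpret P: pair_sigma_finite "simplex_uniform k" "simplex_uniform k"
    unfolding pair_sigma_finite_def using M1.sigma_finite_measure_axioms by simp
  have Wm[measurable]: "Measurable.pred (PiM UNIV (\<lambda>_. borel::real measure)) (\<lambda>x. x \<in> Wp k)"
    using Wp_sets[of k] by (simp add: pred_def)
  have "{x \<in> space (PiM UNIV (\<lambda>_. borel::real measure) \<Otimes>\<^sub>M PiM UNIV (\<lambda>_. borel::real measure)). fst x \<in> Wp k \<and> snd x \<in> Wp k}
     \<in> sets (PiM UNIV (\<lambda>_. borel::real measure) \<Otimes>\<^sub>M PiM UNIV (\<lambda>_. borel::real measure))"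
    by measurable
  note ms0 = this
  have ms: "{x \<in> space (simplex_uniform k \<Otimes>\<^sub>M simplex_uniform k). fst x \<in> Wp k \<and> snd x \<in> Wp k}
     \<in> sets (simplex_uniform k \<Otimes>\<^sub>M simplex_uniform k)"
  proof -
    have se: "sets (simplex_uniform k \<Otimes>\<^sub>M simplex_uniform k) = sets (PiM UNIV (\<lambda>_. borel::real measure) \<Otimes>\<^sub>M PiM UNIV (\<lambda>_. borel::real measure))"
      by (intro sets_pair_measure_cong mu1_sets)
    show ?thesis unfolding se sets_eq_imp_space_eq[OF se] by (rule ms0)
  qed
  have "AE x in simplex_uniform k. AE y in simplex_uniform k. fst (x,y) \<in> Wp k \<and> snd (x,y) \<in> Wp k"
    using mu1_AE[OF k] by eventually_elim (use mu1_AE[OF k] in eventually_elim, auto)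
  from P.AE_pair_measure[OF ms this] show ?thesis unfolding param_uniform_def .
qed

lemma G3:
  assumes k: "k \<ge> 2" and a: "a \<in> Wk k" and b: "b \<in> Wk k" and l: "0 < l" "l \<le> 1"
    and F: "F \<in> borel_measurable (PiM UNIV (\<lambda>_. borel::real measure) \<Otimes>\<^sub>M PiM UNIV (\<lambda>_. borel::real measure))"
  shows "ennreal (l^(2*(k-1))) * (\<integral>\<^sup>+w. F (phi l a (fst w), phi l b (snd w)) \<partial>param_uniform k)
          \<le> (\<integral>\<^sup>+w. F w \<partial>param_uniform k)"
proof -
  let ?N = "PiM UNIV (\<lambda>_. borel::real measure)"
  let ?M = "simplex_uniform k"
  interpret M1: prob_space ?M by (rule mu1_prob[OF k])
  have se: "sets (?M \<Otimes>\<^sub>M ?M) = sets (?N \<Otimes>\<^sub>M ?N)"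
    by (intro sets_pair_measure_cong mu1_sets)
  have mc: "measurable (?M \<Otimes>\<^sub>M ?M) borel = measurable (?N \<Otimes>\<^sub>M ?N) borel"
    by (rule measurable_cong_sets[OF se refl])
  have mc1: "measurable ?M borel = measurable ?N borel"
    by (rule measurable_cong_sets[OF mu1_sets refl])
  have Fm[measurable]: "F \<in> borel_measurable (?N \<Otimes>\<^sub>M ?N)" by (rule F)
  have phia[measurable]: "phi l a \<in> measurable ?N ?N" by (rule phi_meas)
  have phib[measurable]: "phi l b \<in> measurable ?N ?N" by (rule phi_meas)
  define G where "G w = F (phi l a (fst w), phi l b (snd w))" for w
  have Gm: "G \<in> borel_measurable (?N \<Otimes>\<^sub>M ?N)" unfolding G_def by measurable
  define F2 where "F2 w = F (fst w, phi l b (snd w))" for w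
  have F2m: "F2 \<in> borel_measurable (?N \<Otimes>\<^sub>M ?N)" unfolding F2_def by measurable
  define g where "g x = (\<integral>\<^sup>+y. F2 (x, y) \<partial>?M)" for x
  have gm: "g \<in> borel_measurable ?N"
  proof -
    have "F2 \<in> borel_measurable (?M \<Otimes>\<^sub>M ?M)" unfolding mc by (rule F2m)
    from M1.borel_measurable_nn_integral_fst[OF this] have "g \<in> borel_measurable ?M"
      unfolding g_def .
    then show ?thesis unfolding mc1 .
  qed
  have e1: "(\<integral>\<^sup>+w. F w \<partial>param_uniform k) = (\<integral>\<^sup>+x. \<integral>\<^sup>+y. F (x, y) \<partial>?M \<partial>?M)"
  proof -
    have "F \<in> borel_measurable (?M \<Otimes>\<^sub>M ?M)" unfolding mc by (rule F)
    from M1.nn_integral_fst[OF this] show ?thesis unfolding param_uniform_def by simp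
  qed
  have e2: "(\<integral>\<^sup>+w. G w \<partial>param_uniform k) = (\<integral>\<^sup>+x. \<integral>\<^sup>+y. G (x, y) \<partial>?M \<partial>?M)"
  proof -
    have "G \<in> borel_measurable (?M \<Otimes>\<^sub>M ?M)" unfolding mc by (rule Gm)
    from M1.nn_integral_fst[OF this] show ?thesis unfolding param_uniform_def by simp
  qed
  have inner: "ennreal (l^(k-1)) * g x \<le> (\<integral>\<^sup>+y. F (x, y) \<partial>?M)" for x
  proof -
    have xs: "x \<in> space ?N" by (simp add: space_PiM)
    have "(\<lambda>y. F (x, y)) \<in> borel_measurable ?N" by (rule measurable_Pair2[OF Fm xs])
    from F4[OF k b l this] show ?thesis by (simp add: g_def F2_def)
  qed
  have "ennreal (l^(k-1)) * (ennreal (l^(k-1)) * (\<integral>\<^sup>+x. g (phi l a x) \<partial>?M))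
        \<le> ennreal (l^(k-1)) * (\<integral>\<^sup>+x. g x \<partial>?M)"
    by (intro mult_left_mono F4[OF k a l gm]) simp
  also have "\<dots> = (\<integral>\<^sup>+x. ennreal (l^(k-1)) * g x \<partial>?M)"
  proof -
    have "g \<in> borel_measurable ?M" unfolding mc1 by (rule gm)
    then show ?thesis by (subst nn_integral_cmult) auto
  qed
  also have "\<dots> \<le> (\<integral>\<^sup>+x. \<integral>\<^sup>+y. F (x, y) \<partial>?M \<partial>?M)"
    by (intro nn_integral_mono inner)
  finally have A: "ennreal (l^(k-1)) * (ennreal (l^(k-1)) * (\<integral>\<^sup>+x. g (phi l a x) \<partial>?M))
        \<le> (\<integral>\<^sup>+w. F w \<partial>param_uniform k)" unfolding e1 .
  have "(\<integral>\<^sup>+x. g (phi l a x) \<partial>?M) = (\<integral>\<^sup>+w. G w \<partial>param_uniform k)"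
    unfolding e2 by (simp add: g_def F2_def G_def)
  moreover have "ennreal (l^(2*(k-1))) = ennreal (l^(k-1)) * ennreal (l^(k-1))"
    using l by (simp add: ennreal_mult[symmetric] power_add[symmetric] mult_2)
  ultimately show ?thesis using A unfolding G_def by (simp add: mult.assoc)
qed



definition sf :: "nat \<Rightarrow> (nat \<Rightarrow> real) \<times> (nat \<Rightarrow> nat \<Rightarrow> real) \<Rightarrow> nat \<Rightarrow> (nat \<Rightarrow> real) \<times> (nat \<Rightarrow> real) \<Rightarrow> real" where
  "sf k d t w = (\<Sum>j<k. (fst w j - snd w j) * snd d t j)"

definition cc :: "real \<Rightarrow> nat \<Rightarrow> real" where
  "cc \<epsilon> t = \<epsilon> / (2 * (real t + 1)^2)"

lemma MA_eq: "MA k G d t w = (G t (sf k d t w), 1 - G t (sf k d t w))"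
  by (simp add: MA_def sf_def Let_def)

lemma eps_MA: "eps_mod \<epsilon> (MA k G d) t w =
   ((1 - cc \<epsilon> t) * G t (sf k d t w) + cc \<epsilon> t / 2, (1 - cc \<epsilon> t) * (1 - G t (sf k d t w)) + cc \<epsilon> t / 2)"
  by (simp add: eps_mod_def MA_eq cc_def Let_def)

lemma Wk_Wp: "a \<in> Wk k \<Longrightarrow> a \<in> Wp k"
  by (auto simp: Wk_def Wp_def)

lemma wsum_bound:
  assumes w: "w \<in> Wp k" and v: "\<forall>j<k. 0 < v j \<and> v j \<le> 1"
  shows "0 \<le> (\<Sum>j<k. w j * v j)" "(\<Sum>j<k. w j * v j) \<le> 1"
proof -
  show "0 \<le> (\<Sum>j<k. w j * v j)"
    using w v by (intro sum_nonneg) (auto simp: Wp_def)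
  have "(\<Sum>j<k. w j * v j) \<le> (\<Sum>j<k. w j)"
    using w v by (intro sum_mono) (auto simp: Wp_def intro: mult_left_le)
  then show "(\<Sum>j<k. w j * v j) \<le> 1" using w by (simp add: Wp_def)
qed

lemma sf_split: "sf k d t w = (\<Sum>j<k. fst w j * snd d t j) - (\<Sum>j<k. snd w j * snd d t j)"
  by (simp add: sf_def sum_subtractf left_diff_distrib)

lemma sf_bound:
  assumes d: "d \<in> market_data k \<alpha>" and w1: "fst w \<in> Wp k" and w2: "snd w \<in> Wp k"
  shows "\<bar>sf k d t w\<bar> \<le> 1"
proof -
  have v: "\<forall>j<k. 0 < snd d t j \<and> snd d t j \<le> 1" using d by (auto simp: market_data_def)
  show ?thesis unfolding sf_split
    using wsum_bound[OF w1 v] wsum_bound[OF w2 v] by linarith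
qed

lemma sf_phi: "sf k d t (phi l a x1, phi l b x2) = (1-l) * sf k d t (a,b) + l * sf k d t (x1,x2)"
proof -
  have "sf k d t (phi l a x1, phi l b x2) = (\<Sum>j<k. (1-l) * ((a j - b j) * snd d t j) + l * ((x1 j - x2 j) * snd d t j))"
    unfolding sf_def phi_def by (intro sum.cong) (auto simp: algebra_simps)
  also have "\<dots> = (1-l) * sf k d t (a,b) + l * sf k d t (x1,x2)"
    by (simp add: sum.distrib sum_distrib_left sf_def)
  finally show ?thesis .
qed

lemma ret_step:
  fixes c g g' x1 x2 :: real
  assumes c: "0 \<le> c" "c \<le> 1" and g: "0 \<le> g" "g \<le> 1" and gg: "\<bar>g' - g\<bar> \<le> c / 2"
    and x: "x1 > 0" "x2 > 0"
  shows "(1 - c) * ret (g, 1 - g) (x1, x2) \<le> ret ((1-c) * g' + c/2, (1-c) * (1-g') + c/2) (x1, x2)"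
proof -
  have gg1: "g' - g \<le> c/2" "g - g' \<le> c/2" using abs_le_D1[OF gg] abs_le_D2[OF gg] by auto
  have h1: "(1-c) * (g' - g) \<ge> - (c/2)"
  proof -
    have "(1-c) * (g' - g) \<ge> (1-c) * (- (c/2))" using gg1 c by (intro mult_left_mono) auto
    moreover have "(1-c) * (- (c/2)) \<ge> - (c/2)" using c by (simp add: algebra_simps)
    ultimately show ?thesis by linarith
  qed
  have h2: "(1-c) * (g - g') \<ge> - (c/2)"
  proof -
    have "(1-c) * (g - g') \<ge> (1-c) * (- (c/2))" using gg1 c by (intro mult_left_mono) auto
    moreover have "(1-c) * (- (c/2)) \<ge> - (c/2)" using c by (simp add: algebra_simps)
    ultimately show ?thesis by linarith
  qed
  have p1: "(1-c) * g \<le> (1-c) * g' + c/2" using h1 by (simp add: algebra_simps)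
  have p2: "(1-c) * (1-g) \<le> (1-c) * (1-g') + c/2" using h2 by (simp add: algebra_simps)
  have "(1-c) * g * x1 \<le> ((1-c) * g' + c/2) * x1" using p1 x by (intro mult_right_mono) auto
  moreover have "(1-c) * (1-g) * x2 \<le> ((1-c) * (1-g') + c/2) * x2" using p2 x by (intro mult_right_mono) auto
  ultimately show ?thesis by (simp add: ret_def algebra_simps)
qed

lemma prod_cc:
  assumes e: "0 < \<epsilon>" "\<epsilon> < 1"
  shows "1 / (real n + 1) \<le> (\<Prod>t<n. 1 - cc \<epsilon> t)"
proof (induction n)
  case 0
  then show ?case by simp
next
  case (Suc n)
  have c: "cc \<epsilon> n \<le> 1 / (real n + 2)"
  proof -
    have "real n + 2 \<le> 2 * (real n + 1)^2" by (simp add: power2_eq_square algebra_simps)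
    then have "\<epsilon> * (real n + 2) \<le> 1 * (2 * (real n + 1)^2)"
      using e by (intro mult_mono) auto
    then show ?thesis unfolding cc_def by (simp add: field_simps)
  qed
  have P0: "0 \<le> (\<Prod>t<n. 1 - cc \<epsilon> t)"
    using Suc.IH by (rule order.trans[rotated]) simp
  have "1 / (real (Suc n) + 1) = 1 / (real n + 1) * (1 - 1 / (real n + 2))"
    by (simp add: field_simps)
  also have "\<dots> \<le> (\<Prod>t<n. 1 - cc \<epsilon> t) * (1 - cc \<epsilon> n)"
    using Suc c P0 by (intro mult_mono) (auto simp: field_simps)
  finally show ?case by simp
qed

lemma X_pos:
  assumes d: "d \<in> market_data k \<alpha>" and a: "0 < \<alpha>"
  shows "fst (ls_returns \<alpha> d t) > 0" "snd (ls_returns \<alpha> d t) > 0"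
proof -
  have y: "0 < fst d t" "fst d t < 1 + \<alpha>" using d by (auto simp: market_data_def)
  show "fst (ls_returns \<alpha> d t) > 0" using y by (simp add: ls_returns_def)
  have "(1 - fst d t) / \<alpha> > -1" using y a by (simp add: field_simps)
  then show "snd (ls_returns \<alpha> d t) > 0" by (simp add: ls_returns_def)
qed

lemma lip_le0:
  fixes T N e :: real
  assumes "1 \<le> T" "T \<le> N" "0 < e"
  shows "T * (e / (4 * N^3)) \<le> e / (2 * T^2) / 2"
proof -
  have "T * (e / (4 * N^3)) \<le> T * (e / (4 * T^3))"
    using assms by (intro mult_left_mono divide_left_mono mult_pos_pos power_mono) auto
  also have "\<dots> = e / (2 * T^2) / 2"
    using assms by (simp add: field_simps power3_eq_cube power2_eq_square)
  finally show ?thesis .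
qed

lemma lip_le:
  assumes e: "0 < \<epsilon>" and tn: "t < n"
  shows "(real t + 1) * (\<epsilon> / (4 * (real n + 1)^3)) \<le> cc \<epsilon> t / 2"
proof -
  have T: "real t + 1 \<le> real n + 1" using tn by simp
  show ?thesis unfolding cc_def
    by (rule lip_le0[OF _ T e]) simp
qed

lemma wealth_lower:
  assumes HG1: "\<And>t x. -1 \<le> x \<Longrightarrow> x \<le> 1 \<Longrightarrow> 0 \<le> G t x \<and> G t x \<le> 1"
    and HG2: "\<And>t x y. \<bar>G t x - G t y\<bar> \<le> (real t + 1) / 2 * \<bar>x - y\<bar>"
    and d: "d \<in> market_data k \<alpha>" and al: "0 < \<alpha>" and e: "0 < \<epsilon>" "\<epsilon> < 1"
    and a: "a \<in> Wk k" and b: "b \<in> Wk k" and x1: "x1 \<in> Wp k" and x2: "x2 \<in> Wp k"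
    and l: "l = \<epsilon> / (4 * (real n + 1)^3)"
  shows "wealth (\<lambda>t. MA k G d t (a,b)) (ls_returns \<alpha> d) n / (real n + 1)
     \<le> wealth (\<lambda>t. eps_mod \<epsilon> (MA k G d) t (phi l a x1, phi l b x2)) (ls_returns \<alpha> d) n"
proof -
  let ?X = "ls_returns \<alpha> d"
  let ?w = "(phi l a x1, phi l b x2)"
  have l0: "0 \<le> l" using l e by simp
  have step: "(1 - cc \<epsilon> t) * ret (MA k G d t (a,b)) (?X t) \<le> ret (eps_mod \<epsilon> (MA k G d) t ?w) (?X t)
     \<and> 0 \<le> (1 - cc \<epsilon> t) * ret (MA k G d t (a,b)) (?X t)" if tn: "t < n" for t
  proof -
    define s0 where "s0 = sf k d t (a,b)"
    define s1 where "s1 = sf k d t (x1,x2)"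
    have s0b: "\<bar>s0\<bar> \<le> 1" unfolding s0_def using sf_bound[OF d] a b Wk_Wp by simp
    have s1b: "\<bar>s1\<bar> \<le> 1" unfolding s1_def using sf_bound[OF d] x1 x2 by simp
    have sw: "sf k d t ?w = (1-l) * s0 + l * s1" unfolding s0_def s1_def by (rule sf_phi)
    have "sf k d t ?w - s0 = l * (s1 - s0)" unfolding sw by (simp add: algebra_simps)
    then have "\<bar>sf k d t ?w - s0\<bar> = l * \<bar>s1 - s0\<bar>"
      using l0 by (simp add: abs_mult)
    also have "\<dots> \<le> l * 2" using s0b s1b l0 by (intro mult_left_mono) auto
    finally have sd: "\<bar>sf k d t ?w - s0\<bar> \<le> l * 2" .
    have "\<bar>G t (sf k d t ?w) - G t s0\<bar> \<le> (real t + 1) / 2 * (l * 2)"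
    proof -
      have "(real t + 1) / 2 * \<bar>sf k d t ?w - s0\<bar> \<le> (real t + 1) / 2 * (l * 2)"
        using sd by (intro mult_left_mono) auto
      with HG2[of t "sf k d t ?w" s0] show ?thesis by linarith
    qed
    also have "\<dots> = (real t + 1) * l" by simp
    also have "\<dots> \<le> cc \<epsilon> t / 2" unfolding l by (rule lip_le[OF e(1) tn])
    finally have gd: "\<bar>G t (sf k d t ?w) - G t s0\<bar> \<le> cc \<epsilon> t / 2" .
    have c0: "0 \<le> cc \<epsilon> t" "cc \<epsilon> t \<le> 1"
    proof -
      show "0 \<le> cc \<epsilon> t" using e by (simp add: cc_def)
      have "1 \<le> 2 * (real t + 1)^2" by (simp add: power2_eq_square algebra_simps)
      then show "cc \<epsilon> t \<le> 1" using e unfolding cc_def by (simp add: field_simps)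
    qed
    have g0: "0 \<le> G t s0" "G t s0 \<le> 1" using HG1[of s0 t] s0b by (auto simp: abs_le_iff)
    have xp: "fst (?X t) > 0" "snd (?X t) > 0" using X_pos[OF d al] by auto
    have X: "?X t = (fst (?X t), snd (?X t))" by simp
    have "(1 - cc \<epsilon> t) * ret (G t s0, 1 - G t s0) (fst (?X t), snd (?X t))
       \<le> ret ((1 - cc \<epsilon> t) * G t (sf k d t ?w) + cc \<epsilon> t / 2, (1 - cc \<epsilon> t) * (1 - G t (sf k d t ?w)) + cc \<epsilon> t / 2) (fst (?X t), snd (?X t))"
      by (rule ret_step[OF c0 g0 gd xp])
    moreover have "0 \<le> (1 - cc \<epsilon> t) * ret (G t s0, 1 - G t s0) (fst (?X t), snd (?X t))"
      using c0 g0 xp by (intro mult_nonneg_nonneg) (auto simp: ret_def)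
    ultimately show ?thesis
      by (subst (1 2 3) X) (simp add: eps_MA MA_eq s0_def)
  qed
  have "1 / (real n + 1) * wealth (\<lambda>t. MA k G d t (a,b)) ?X n
      \<le> (\<Prod>t<n. 1 - cc \<epsilon> t) * wealth (\<lambda>t. MA k G d t (a,b)) ?X n"
  proof (rule mult_right_mono[OF prod_cc[OF e]])
    show "0 \<le> wealth (\<lambda>t. MA k G d t (a,b)) ?X n"
      unfolding wealth_def
    proof (rule prod_nonneg)
      fix t assume "t \<in> {..<n}"
      then have "t < n" by simp
      from step[OF this] have "0 \<le> (1 - cc \<epsilon> t) * ret (MA k G d t (a,b)) (?X t)" by simp
      moreover have "0 < 1 - cc \<epsilon> t"
      proof -
        have "1 \<le> 2 * (real t + 1)^2" by (simp add: power2_eq_square algebra_simps)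
        then show ?thesis using e unfolding cc_def by (simp add: field_simps)
      qed
      ultimately show "0 \<le> ret (MA k G d t (a,b)) (?X t)"
        by (simp add: zero_le_mult_iff)
    qed
  qed
  also have "\<dots> = (\<Prod>t<n. (1 - cc \<epsilon> t) * ret (MA k G d t (a,b)) (?X t))"
    by (simp add: wealth_def prod.distrib)
  also have "\<dots> \<le> wealth (\<lambda>t. eps_mod \<epsilon> (MA k G d) t ?w) ?X n"
    unfolding wealth_def using step by (intro prod_mono) auto
  finally show ?thesis by simp
qed

lemma telescope:
  assumes P: "prob_space M"
    and i1: "\<And>t. integrable M (\<lambda>w. fst (S t w) * wealth (\<lambda>s. S s w) x t)"
    and i2: "\<And>t. integrable M (\<lambda>w. snd (S t w) * wealth (\<lambda>s. S s w) x t)"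
    and pos: "\<And>t. 0 < (\<integral>w. wealth (\<lambda>s. S s w) x t \<partial>M)"
  shows "wealth (univ_strategy M S x) x n = (\<integral>w. wealth (\<lambda>s. S s w) x n \<partial>M)"
proof (induction n)
  case 0
  interpret prob_space M by (rule P)
  show ?case by (simp add: wealth_def prob_space)
next
  case (Suc n)
  define Z where "Z = (\<integral>w. wealth (\<lambda>s. S s w) x n \<partial>M)"
  define A1 where "A1 = (\<integral>w. fst (S n w) * wealth (\<lambda>s. S s w) x n \<partial>M)"
  define A2 where "A2 = (\<integral>w. snd (S n w) * wealth (\<lambda>s. S s w) x n \<partial>M)"
  have Z: "Z \<noteq> 0" using pos[of n] by (simp add: Z_def)
  have U: "univ_strategy M S x n = (A1 / Z, A2 / Z)"
    by (simp add: univ_strategy_def Z_def A1_def A2_def Let_def)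
  have "wealth (univ_strategy M S x) x (Suc n) = wealth (univ_strategy M S x) x n * ret (univ_strategy M S x n) (x n)"
    by (simp add: wealth_def)
  also have "\<dots> = Z * (A1 / Z * fst (x n) + A2 / Z * snd (x n))"
    using Suc.IH by (simp add: U ret_def Z_def)
  also have "\<dots> = A1 * fst (x n) + A2 * snd (x n)"
    using Z by (simp add: field_simps)
  also have "\<dots> = (\<integral>w. fst (S n w) * wealth (\<lambda>s. S s w) x n * fst (x n) + snd (S n w) * wealth (\<lambda>s. S s w) x n * snd (x n) \<partial>M)"
    using i1[of n] i2[of n] by (simp add: A1_def A2_def)
  also have "\<dots> = (\<integral>w. wealth (\<lambda>s. S s w) x (Suc n) \<partial>M)"
    by (intro Bochner_Integration.integral_cong) (auto simp: wealth_def ret_def algebra_simps)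
  finally show ?case .
qed

lemma sf_meas[measurable]: "(\<lambda>w. sf k d t w) \<in> borel_measurable (PiM UNIV (\<lambda>_. borel::real measure) \<Otimes>\<^sub>M PiM UNIV (\<lambda>_. borel::real measure))"
  unfolding sf_def by measurable

lemma R_meas:
  assumes HG3: "\<And>t. G t \<in> borel_measurable borel"
  shows "(\<lambda>w. wealth (\<lambda>s. eps_mod \<epsilon> (MA k G d) s w) X n) \<in> borel_measurable (PiM UNIV (\<lambda>_. borel::real measure) \<Otimes>\<^sub>M PiM UNIV (\<lambda>_. borel::real measure))"
    and "(\<lambda>w. fst (eps_mod \<epsilon> (MA k G d) n w) * wealth (\<lambda>s. eps_mod \<epsilon> (MA k G d) s w) X n) \<in> borel_measurable (PiM UNIV (\<lambda>_. borel::real measure) \<Otimes>\<^sub>M PiM UNIV (\<lambda>_. borel::real measure))"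
    and "(\<lambda>w. snd (eps_mod \<epsilon> (MA k G d) n w) * wealth (\<lambda>s. eps_mod \<epsilon> (MA k G d) s w) X n) \<in> borel_measurable (PiM UNIV (\<lambda>_. borel::real measure) \<Otimes>\<^sub>M PiM UNIV (\<lambda>_. borel::real measure))"
proof -
  note HG3[measurable]
  show "(\<lambda>w. wealth (\<lambda>s. eps_mod \<epsilon> (MA k G d) s w) X n) \<in> borel_measurable (PiM UNIV (\<lambda>_. borel::real measure) \<Otimes>\<^sub>M PiM UNIV (\<lambda>_. borel::real measure))"
    unfolding wealth_def ret_def eps_MA by measurable
  show "(\<lambda>w. fst (eps_mod \<epsilon> (MA k G d) n w) * wealth (\<lambda>s. eps_mod \<epsilon> (MA k G d) s w) X n) \<in> borel_measurable (PiM UNIV (\<lambda>_. borel::real measure) \<Otimes>\<^sub>M PiM UNIV (\<lambda>_. borel::real measure))"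
    unfolding wealth_def ret_def eps_MA by measurable
  show "(\<lambda>w. snd (eps_mod \<epsilon> (MA k G d) n w) * wealth (\<lambda>s. eps_mod \<epsilon> (MA k G d) s w) X n) \<in> borel_measurable (PiM UNIV (\<lambda>_. borel::real measure) \<Otimes>\<^sub>M PiM UNIV (\<lambda>_. borel::real measure))"
    unfolding wealth_def ret_def eps_MA by measurable
qed

lemma cc_bounds: "0 < \<epsilon> \<Longrightarrow> \<epsilon> < 1 \<Longrightarrow> 0 \<le> cc \<epsilon> t \<and> cc \<epsilon> t \<le> 1"
proof -
  assume e: "0 < \<epsilon>" "\<epsilon> < 1"
  have "1 \<le> 2 * (real t + 1)^2" by (simp add: power2_eq_square algebra_simps)
  then show ?thesis using e unfolding cc_def by (simp add: field_simps)
qed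

lemma Sb_bounds:
  assumes HG1: "\<And>t x. -1 \<le> x \<Longrightarrow> x \<le> 1 \<Longrightarrow> 0 \<le> G t x \<and> G t x \<le> 1"
    and d: "d \<in> market_data k \<alpha>" and e: "0 < \<epsilon>" "\<epsilon> < 1"
    and w1: "fst w \<in> Wp k" and w2: "snd w \<in> Wp k"
  shows "0 \<le> fst (eps_mod \<epsilon> (MA k G d) t w) \<and> fst (eps_mod \<epsilon> (MA k G d) t w) \<le> 1 \<and>
         0 \<le> snd (eps_mod \<epsilon> (MA k G d) t w) \<and> snd (eps_mod \<epsilon> (MA k G d) t w) \<le> 1"
proof -
  have sb: "\<bar>sf k d t w\<bar> \<le> 1" by (rule sf_bound[OF d w1 w2])
  have g: "0 \<le> G t (sf k d t w)" "G t (sf k d t w) \<le> 1" using HG1[of "sf k d t w" t] sb by (auto simp: abs_le_iff)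
  have c: "0 \<le> cc \<epsilon> t" "cc \<epsilon> t \<le> 1" using cc_bounds[OF e] by auto
  have "(1 - cc \<epsilon> t) * G t (sf k d t w) \<le> (1 - cc \<epsilon> t) * 1" using g c by (intro mult_left_mono) auto
  moreover have "(1 - cc \<epsilon> t) * (1 - G t (sf k d t w)) \<le> (1 - cc \<epsilon> t) * 1" using g c by (intro mult_left_mono) auto
  moreover have "0 \<le> (1 - cc \<epsilon> t) * G t (sf k d t w)" using g c by simp
  moreover have "0 \<le> (1 - cc \<epsilon> t) * (1 - G t (sf k d t w))" using g c by simp
  ultimately show ?thesis using c by (simp add: eps_MA)
qed

lemma ret_bounds:
  assumes "0 \<le> fst p" "fst p \<le> 1" "0 \<le> snd p" "snd p \<le> 1" "0 < fst x" "0 < snd x"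
  shows "0 \<le> ret p x \<and> ret p x \<le> fst x + snd x"
proof -
  have a1: "fst p * fst x \<le> fst x" using assms mult_right_mono[of "fst p" 1 "fst x"] by simp
  have a2: "snd p * snd x \<le> snd x" using assms mult_right_mono[of "snd p" 1 "snd x"] by simp
  have a3: "0 \<le> fst p * fst x" "0 \<le> snd p * snd x" using assms by simp_all
  show ?thesis unfolding ret_def using a1 a2 a3 by linarith
qed

lemma R_bounds:
  assumes HG1: "\<And>t x. -1 \<le> x \<Longrightarrow> x \<le> 1 \<Longrightarrow> 0 \<le> G t x \<and> G t x \<le> 1"
    and d: "d \<in> market_data k \<alpha>" and al: "0 < \<alpha>" and e: "0 < \<epsilon>" "\<epsilon> < 1"
    and w1: "fst w \<in> Wp k" and w2: "snd w \<in> Wp k"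
  shows "0 \<le> wealth (\<lambda>s. eps_mod \<epsilon> (MA k G d) s w) (ls_returns \<alpha> d) n \<and>
         wealth (\<lambda>s. eps_mod \<epsilon> (MA k G d) s w) (ls_returns \<alpha> d) n \<le> (\<Prod>s<n. fst (ls_returns \<alpha> d s) + snd (ls_returns \<alpha> d s))"
proof -
  have rb: "0 \<le> ret (eps_mod \<epsilon> (MA k G d) s w) (ls_returns \<alpha> d s) \<and>
      ret (eps_mod \<epsilon> (MA k G d) s w) (ls_returns \<alpha> d s) \<le> fst (ls_returns \<alpha> d s) + snd (ls_returns \<alpha> d s)" for s
    using Sb_bounds[where G=G, OF HG1 d e w1 w2, where t=s] X_pos[OF d al, of s] by (intro ret_bounds) auto
  show ?thesis unfolding wealth_def
    using rb by (auto intro!: prod_nonneg prod_mono)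
qed

lemma integ:
  fixes B :: real
  assumes k: "k \<ge> 2"
    and f: "f \<in> borel_measurable (PiM UNIV (\<lambda>_. borel::real measure) \<Otimes>\<^sub>M PiM UNIV (\<lambda>_. borel::real measure))"
    and B: "\<And>w. fst w \<in> Wp k \<Longrightarrow> snd w \<in> Wp k \<Longrightarrow> \<bar>f w\<bar> \<le> B"
  shows "integrable (param_uniform k) f"
proof -
  interpret prob_space "param_uniform k" by (rule mu_prob[OF k])
  have fm: "f \<in> borel_measurable (param_uniform k)"
    using f measurable_cong_sets[OF mu_sets refl] by blast
  have "AE w in param_uniform k. norm (f w) \<le> B"
    using mu_AE[OF k] by eventually_elim (use B in auto)
  from integrable_const_bound[OF this fm] show ?thesis .
qed

lemma MA_wealth_pos:
  assumes HG1: "\<And>t x. -1 \<le> x \<Longrightarrow> x \<le> 1 \<Longrightarrow> 0 \<le> G t x \<and> G t x \<le> 1"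
    and d: "d \<in> market_data k \<alpha>" and al: "0 < \<alpha>" and a: "a \<in> Wk k" and b: "b \<in> Wk k"
  shows "0 < wealth (\<lambda>t. MA k G d t (a,b)) (ls_returns \<alpha> d) n"
  unfolding wealth_def
proof (rule prod_pos)
  fix t assume "t \<in> {..<n}"
  define g where "g = G t (sf k d t (a,b))"
  have sb: "\<bar>sf k d t (a,b)\<bar> \<le> 1" using sf_bound[OF d] a b Wk_Wp by simp
  have g: "0 \<le> g" "g \<le> 1" using HG1[of "sf k d t (a,b)" t] sb by (auto simp: abs_le_iff g_def)
  have xp: "fst (ls_returns \<alpha> d t) > 0" "snd (ls_returns \<alpha> d t) > 0" using X_pos[OF d al] by auto
  have "0 < g * fst (ls_returns \<alpha> d t) + (1 - g) * snd (ls_returns \<alpha> d t)"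
  proof (cases "g = 0")
    case True then show ?thesis using xp by simp
  next
    case False then have "g > 0" using g by simp
    then show ?thesis using xp g by (intro add_pos_nonneg) auto
  qed
  then show "0 < ret (MA k G d t (a, b)) (ls_returns \<alpha> d t)"
    by (simp add: MA_eq ret_def g_def)
qed

lemma LB:
  assumes k: "k \<ge> 2"
    and HG1: "\<And>t x. -1 \<le> x \<Longrightarrow> x \<le> 1 \<Longrightarrow> 0 \<le> G t x \<and> G t x \<le> 1"
    and HG2: "\<And>t x y. \<bar>G t x - G t y\<bar> \<le> (real t + 1) / 2 * \<bar>x - y\<bar>"
    and HG3: "\<And>t. G t \<in> borel_measurable borel"
    and d: "d \<in> market_data k \<alpha>" and al: "0 < \<alpha>" and e: "0 < \<epsilon>" "\<epsilon> < 1"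
    and a: "a \<in> Wk k" and b: "b \<in> Wk k"
    and l: "l = \<epsilon> / (4 * (real n + 1)^3)"
  shows "l^(2*(k-1)) * (wealth (\<lambda>t. MA k G d t (a,b)) (ls_returns \<alpha> d) n / (real n + 1))
     \<le> (\<integral>w. wealth (\<lambda>s. eps_mod \<epsilon> (MA k G d) s w) (ls_returns \<alpha> d) n \<partial>param_uniform k)"
proof -
  interpret prob_space "param_uniform k" by (rule mu_prob[OF k])
  define R where "R w = wealth (\<lambda>s. eps_mod \<epsilon> (MA k G d) s w) (ls_returns \<alpha> d) n" for w
  define c where "c = wealth (\<lambda>t. MA k G d t (a,b)) (ls_returns \<alpha> d) n / (real n + 1)"
  have c0: "0 \<le> c" unfolding c_def using MA_wealth_pos[where G=G, OF HG1 d al a b, where n=n] by simp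
  have Rm: "R \<in> borel_measurable (PiM UNIV (\<lambda>_. borel::real measure) \<Otimes>\<^sub>M PiM UNIV (\<lambda>_. borel::real measure))"
    unfolding R_def by (rule R_meas(1)[OF HG3])
  have Rb: "0 \<le> R w \<and> R w \<le> (\<Prod>s<n. fst (ls_returns \<alpha> d s) + snd (ls_returns \<alpha> d s))"
    if "fst w \<in> Wp k" "snd w \<in> Wp k" for w
    unfolding R_def by (rule R_bounds[where G=G, OF HG1 d al e that])
  have Rint: "integrable (param_uniform k) R"
    using Rb by (intro integ[OF k Rm]) (auto simp: abs_le_iff)
  have Rnn: "AE w in param_uniform k. 0 \<le> R w"
    using mu_AE[OF k] by eventually_elim (use Rb in auto)
  have Fm: "(\<lambda>w. ennreal (R w)) \<in> borel_measurable (PiM UNIV (\<lambda>_. borel::real measure) \<Otimes>\<^sub>M PiM UNIV (\<lambda>_. borel::real measure))"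
    using Rm by measurable
  have N: "1 \<le> 4 * (real n + 1)^3"
  proof -
    have "1 \<le> (real n + 1)^3" by (rule one_le_power) simp
    then show ?thesis by linarith
  qed
  have l0: "0 < l" "l \<le> 1"
  proof -
    show "0 < l" unfolding l using e N by (intro divide_pos_pos) auto
    have "\<epsilon> / (4 * (real n + 1)^3) \<le> \<epsilon> / 1"
      using e N by (intro divide_left_mono) auto
    then have "l \<le> \<epsilon>" unfolding l by simp
    then show "l \<le> 1" using e by linarith
  qed
  have G3': "ennreal (l^(2*(k-1))) * (\<integral>\<^sup>+w. ennreal (R (phi l a (fst w), phi l b (snd w))) \<partial>param_uniform k)
      \<le> (\<integral>\<^sup>+w. ennreal (R w) \<partial>param_uniform k)"
    using G3[OF k a b l0 Fm] by simp
  have "(\<integral>\<^sup>+w. ennreal c \<partial>param_uniform k) \<le> (\<integral>\<^sup>+w. ennreal (R (phi l a (fst w), phi l b (snd w))) \<partial>param_uniform k)"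
  proof (rule nn_integral_mono_AE)
    show "AE w in param_uniform k. ennreal c \<le> ennreal (R (phi l a (fst w), phi l b (snd w)))"
      using mu_AE[OF k]
    proof eventually_elim
      case (elim w)
      then have "c \<le> R (phi l a (fst w), phi l b (snd w))"
        unfolding c_def R_def using wealth_lower[where G=G, OF HG1 HG2 d al e a b _ _ l] by blast
      then show ?case by (rule ennreal_leI)
    qed
  qed
  then have "ennreal c \<le> (\<integral>\<^sup>+w. ennreal (R (phi l a (fst w), phi l b (snd w))) \<partial>param_uniform k)"
    by (simp add: emeasure_space_1)
  then have "ennreal (l^(2*(k-1))) * ennreal c \<le> (\<integral>\<^sup>+w. ennreal (R w) \<partial>param_uniform k)"
    using G3' by (meson mult_left_mono order.trans zero_le)
  also have "\<dots> = ennreal (\<integral>w. R w \<partial>param_uniform k)"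
    by (rule nn_integral_eq_integral[OF Rint Rnn])
  finally have "ennreal (l^(2*(k-1)) * c) \<le> ennreal (\<integral>w. R w \<partial>param_uniform k)"
    using l0 c0 by (simp add: ennreal_mult)
  moreover have "0 \<le> (\<integral>w. R w \<partial>param_uniform k)" by (rule integral_nonneg_AE[OF Rnn])
  ultimately show ?thesis unfolding c_def R_def by simp
qed

lemma ln_over_n1: "(\<lambda>n. ln (real n + 1) / real n) \<longlonglongrightarrow> 0"
proof -
  have a: "(\<lambda>n. ln (real (Suc n)) / real (Suc n)) \<longlonglongrightarrow> 0"
    by (rule LIMSEQ_Suc[OF lim_ln_over_n])
  have "(\<lambda>n. ln (real (Suc n)) / real (Suc n) * (real (Suc n) / real n)) \<longlonglongrightarrow> 0 * 1"
    by (intro tendsto_mult a LIMSEQ_Suc_n_over_n)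
  moreover have "ln (real (Suc n)) / real (Suc n) * (real (Suc n) / real n) = ln (real n + 1) / real n" for n
    by (simp add: field_simps del: of_nat_Suc)
  ultimately show ?thesis by (simp add: add.commute)
qed

lemma eta_lim:
  assumes e: "0 < \<epsilon>"
  shows "(\<lambda>n. (ln (real n + 1) - real (2*m) * ln (\<epsilon> / (4 * (real n + 1)^3))) / real n) \<longlonglongrightarrow> 0"
proof -
  have eq: "(ln (real n + 1) - real (2*m) * ln (\<epsilon> / (4 * (real n + 1)^3))) / real n
     = (1 + 6 * real m) * (ln (real n + 1) / real n) + (real (2*m) * (ln 4 - ln \<epsilon>)) * (1 / real n)" for n
  proof -
    have L: "ln (\<epsilon> / (4 * (real n + 1)^3)) = ln \<epsilon> - (ln 4 + 3 * ln (real n + 1))"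
      using e by (simp add: ln_div ln_mult ln_realpow)
    show ?thesis unfolding L by (cases "n = 0") (simp_all add: field_simps)
  qed
  have "(\<lambda>n. (1 + 6 * real m) * (ln (real n + 1) / real n) + (real (2*m) * (ln 4 - ln \<epsilon>)) * (1 / real n))
      \<longlonglongrightarrow> (1 + 6 * real m) * 0 + (real (2*m) * (ln 4 - ln \<epsilon>)) * 0"
    by (intro tendsto_intros ln_over_n1)
  then show ?thesis unfolding eq by simp
qed

lemma main_general:
  assumes k: "k \<ge> 2" and al: "0 < \<alpha>"
    and HG1: "\<And>t x. -1 \<le> x \<Longrightarrow> x \<le> 1 \<Longrightarrow> 0 \<le> G t x \<and> G t x \<le> 1"
    and HG2: "\<And>t x y. \<bar>G t x - G t y\<bar> \<le> (real t + 1) / 2 * \<bar>x - y\<bar>"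
    and HG3: "\<And>t. G t \<in> borel_measurable borel"
  shows "universalizable (market_data k \<alpha>) (ls_returns \<alpha>) (Wk k \<times> Wk k) (param_uniform k) (MA k G)"
  unfolding universalizable_def universalization_def
proof (intro allI impI)
  fix \<epsilon> :: real assume "0 < \<epsilon> \<and> \<epsilon> < 1"
  then have e: "0 < \<epsilon>" "\<epsilon> < 1" by auto
  define l where "l n = \<epsilon> / (4 * (real n + 1)^3)" for n :: nat
  define \<eta> where "\<eta> n = (ln (real n + 1) - real (2*(k-1)) * ln (l n)) / real n" for n :: nat
  have lim: "\<eta> \<longlonglongrightarrow> 0" unfolding \<eta>_def l_def by (rule eta_lim[OF e(1)])
  have lpos: "0 < l n" for n unfolding l_def using e by (intro divide_pos_pos) auto
  define w0 :: "nat \<Rightarrow> real" where "w0 = (\<lambda>i. if i = 0 then 1 else 0)"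
  have w0: "w0 \<in> Wk k" using k by (auto simp: Wk_def w0_def)
  have bound: "(SUP w\<in>Wk k \<times> Wk k. growth (\<lambda>t. MA k G d t w) (ls_returns \<alpha> d) n) - \<eta> n
      \<le> growth (univ_strategy (param_uniform k) (eps_mod \<epsilon> (MA k G d)) (ls_returns \<alpha> d)) (ls_returns \<alpha> d) n"
    if d: "d \<in> market_data k \<alpha>" and n: "n \<ge> 1" for d n
  proof -
    let ?X = "ls_returns \<alpha> d"
    let ?S = "eps_mod \<epsilon> (MA k G d)"
    define R where "R t w = wealth (\<lambda>s. ?S s w) ?X t" for t w
    define Z where "Z t = (\<integral>w. R t w \<partial>param_uniform k)" for t
    have LBt: "(l t)^(2*(k-1)) * (wealth (\<lambda>s. MA k G d s (a,b)) ?X t / (real t + 1)) \<le> Z t"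
      if "a \<in> Wk k" "b \<in> Wk k" for a b t
      unfolding Z_def R_def by (rule LB[OF k HG1 HG2 HG3 d al e that l_def])
    have Zpos: "0 < Z t" for t
    proof -
      have "0 < wealth (\<lambda>s. MA k G d s (w0,w0)) ?X t" by (rule MA_wealth_pos[where G=G, OF HG1 d al w0 w0])
      then have "0 < (l t)^(2*(k-1)) * (wealth (\<lambda>s. MA k G d s (w0,w0)) ?X t / (real t + 1))"
        using lpos[of t] by simp
      also have "\<dots> \<le> Z t" by (rule LBt[OF w0 w0])
      finally show ?thesis .
    qed
    have Bb: "\<bar>f w * R t w\<bar> \<le> (\<Prod>s<t. fst (?X s) + snd (?X s))"
      if "fst w \<in> Wp k" "snd w \<in> Wp k" "0 \<le> f w" "f w \<le> 1" for f w t
    proof -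
      have "0 \<le> R t w \<and> R t w \<le> (\<Prod>s<t. fst (?X s) + snd (?X s))"
        unfolding R_def by (rule R_bounds[where G=G, OF HG1 d al e that(1,2)])
      moreover have "f w * R t w \<le> 1 * R t w" using calculation that by (intro mult_right_mono) auto
      ultimately show ?thesis using that by (simp add: abs_mult)
    qed
    have i1: "integrable (param_uniform k) (\<lambda>w. fst (?S t w) * wealth (\<lambda>s. ?S s w) ?X t)" for t
    proof (rule integ[OF k R_meas(2)[OF HG3]])
      fix w :: "(nat \<Rightarrow> real) \<times> (nat \<Rightarrow> real)" assume w: "fst w \<in> Wp k" "snd w \<in> Wp k"
      show "\<bar>fst (?S t w) * wealth (\<lambda>s. ?S s w) ?X t\<bar> \<le> (\<Prod>s<t. fst (?X s) + snd (?X s))"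
        using Bb[of w "\<lambda>w. fst (?S t w)" t] Sb_bounds[where G=G, OF HG1 d e w, of t] w unfolding R_def by auto
    qed
    have i2: "integrable (param_uniform k) (\<lambda>w. snd (?S t w) * wealth (\<lambda>s. ?S s w) ?X t)" for t
    proof (rule integ[OF k R_meas(3)[OF HG3]])
      fix w :: "(nat \<Rightarrow> real) \<times> (nat \<Rightarrow> real)" assume w: "fst w \<in> Wp k" "snd w \<in> Wp k"
      show "\<bar>snd (?S t w) * wealth (\<lambda>s. ?S s w) ?X t\<bar> \<le> (\<Prod>s<t. fst (?X s) + snd (?X s))"
        using Bb[of w "\<lambda>w. snd (?S t w)" t] Sb_bounds[where G=G, OF HG1 d e w, of t] w unfolding R_def by auto
    qed
    have tele: "wealth (univ_strategy (param_uniform k) ?S ?X) ?X n = Z n"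
      unfolding Z_def R_def
      by (rule telescope[OF mu_prob[OF k] i1 i2]) (use Zpos in \<open>simp add: Z_def R_def\<close>)
    have nr: "real n > 0" using n by simp
    have each: "growth (\<lambda>t. MA k G d t w) ?X n - \<eta> n \<le> growth (univ_strategy (param_uniform k) ?S ?X) ?X n"
      if w: "w \<in> Wk k \<times> Wk k" for w
    proof -
      obtain a b where ab: "w = (a,b)" "a \<in> Wk k" "b \<in> Wk k" using w by auto
      define c where "c = wealth (\<lambda>t. MA k G d t (a,b)) ?X n"
      have c: "0 < c" unfolding c_def by (rule MA_wealth_pos[where G=G, OF HG1 d al ab(2,3)])
      have le: "(l n)^(2*(k-1)) * (c / (real n + 1)) \<le> Z n"
        unfolding c_def by (rule LBt[OF ab(2,3)])
      have pos: "0 < (l n)^(2*(k-1)) * (c / (real n + 1))" using c lpos[of n] by simp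
      have "ln ((l n)^(2*(k-1)) * (c / (real n + 1))) = real (2*(k-1)) * ln (l n) + (ln c - ln (real n + 1))"
        using c lpos[of n] by (simp add: ln_mult ln_div ln_realpow)
      then have "ln c - (ln (real n + 1) - real (2*(k-1)) * ln (l n)) \<le> ln (Z n)"
        using ln_mono[OF le pos] by simp
      then have "(ln c - (ln (real n + 1) - real (2*(k-1)) * ln (l n))) / real n \<le> ln (Z n) / real n"
        using nr by (intro divide_right_mono) auto
      then show ?thesis
        unfolding growth_def tele ab(1) \<eta>_def c_def[symmetric] by (simp add: diff_divide_distrib)
    qed
    have "(SUP w\<in>Wk k \<times> Wk k. growth (\<lambda>t. MA k G d t w) ?X n) \<le> growth (univ_strategy (param_uniform k) ?S ?X) ?X n + \<eta> n"
      using w0 each by (intro cSUP_least) (auto simp: algebra_simps)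
    then show ?thesis by simp
  qed
  show "\<exists>\<eta>. \<eta> \<longlonglongrightarrow> 0 \<and> (\<forall>d\<in>market_data k \<alpha>. \<forall>n\<ge>1.
      (SUP w\<in>Wk k \<times> Wk k. growth (\<lambda>t. MA k G d t w) (ls_returns \<alpha> d) n) - \<eta> n
      \<le> growth (univ_strategy (param_uniform k) (eps_mod \<epsilon> (MA k G d)) (ls_returns \<alpha> d)) (ls_returns \<alpha> d) n)"
    using lim bound by blast
qed



lemma clamp_lip: "\<bar>max 0 (min 1 a) - max 0 (min 1 b)\<bar> \<le> \<bar>a - b\<bar>" for a b :: real
  by (auto simp: max_def min_def abs_if)

lemma g_step_clamp:
  assumes N: "0 < N"
  shows "g_step N x = max 0 (min 1 (real N / 2 * (x + 1 / real N)))"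
proof -
  have Np: "real N > 0" using N by simp
  have e: "real N / 2 * (x + 1 / real N) = (real N * x + 1) / 2" using Np by (simp add: field_simps)
  have c1: "x < - 1 / real N \<longleftrightarrow> real N * x + 1 < 0" using Np by (simp add: field_simps) linarith
  have c2: "x \<le> 1 / real N \<longleftrightarrow> real N * x + 1 \<le> 2" using Np by (simp add: field_simps)
  show ?thesis unfolding g_step_def e c1 c2 by (auto simp: max_def min_def)
qed

lemma G_line:
  shows "\<And>t x. -1 \<le> x \<Longrightarrow> x \<le> 1 \<Longrightarrow> 0 \<le> (\<lambda>t. g_line) t x \<and> (\<lambda>t. g_line) t x \<le> 1"
    and "\<And>t x y. \<bar>(\<lambda>t. g_line) t x - (\<lambda>t. g_line) t y\<bar> \<le> (real t + 1) / 2 * \<bar>x - y\<bar>"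
    and "\<And>t. (\<lambda>t. g_line) t \<in> borel_measurable borel"
proof -
  fix t :: nat and x y :: real
  show "-1 \<le> x \<Longrightarrow> x \<le> 1 \<Longrightarrow> 0 \<le> (\<lambda>t. g_line) t x \<and> (\<lambda>t. g_line) t x \<le> 1"
    by (simp add: g_line_def)
  have "\<bar>g_line x - g_line y\<bar> = \<bar>x - y\<bar> / 2"
    unfolding g_line_def diff_divide_distrib[symmetric] by simp
  also have "\<dots> \<le> (real t + 1) / 2 * \<bar>x - y\<bar>"
    using mult_right_mono[of "1/2" "(real t + 1)/2" "\<bar>x - y\<bar>"] by simp
  finally show "\<bar>(\<lambda>t. g_line) t x - (\<lambda>t. g_line) t y\<bar> \<le> (real t + 1) / 2 * \<bar>x - y\<bar>" by simp
  show "(\<lambda>t. g_line) t \<in> borel_measurable borel" unfolding g_line_def by measurable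
qed

lemma G_step:
  shows "\<And>t x. -1 \<le> x \<Longrightarrow> x \<le> 1 \<Longrightarrow> 0 \<le> (\<lambda>t. g_step (max 1 t)) t x \<and> (\<lambda>t. g_step (max 1 t)) t x \<le> 1"
    and "\<And>t x y. \<bar>(\<lambda>t. g_step (max 1 t)) t x - (\<lambda>t. g_step (max 1 t)) t y\<bar> \<le> (real t + 1) / 2 * \<bar>x - y\<bar>"
    and "\<And>t. (\<lambda>t. g_step (max 1 t)) t \<in> borel_measurable borel"
proof -
  fix t :: nat and x y :: real
  define N where "N = max 1 t"
  have N: "0 < N" "real N \<le> real t + 1" by (auto simp: N_def)
  show "-1 \<le> x \<Longrightarrow> x \<le> 1 \<Longrightarrow> 0 \<le> (\<lambda>t. g_step (max 1 t)) t x \<and> (\<lambda>t. g_step (max 1 t)) t x \<le> 1"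
    using g_step_clamp[OF N(1), of x] by (simp add: N_def)
  have E: "real N / 2 * (x + 1 / real N) - real N / 2 * (y + 1 / real N) = real N / 2 * (x - y)"
    by (subst right_diff_distrib[symmetric]) simp
  have "\<bar>g_step N x - g_step N y\<bar> \<le> \<bar>real N / 2 * (x + 1 / real N) - real N / 2 * (y + 1 / real N)\<bar>"
    unfolding g_step_clamp[OF N(1)] by (rule clamp_lip)
  also have "\<dots> = real N / 2 * \<bar>x - y\<bar>"
    unfolding E abs_mult by simp
  also have "\<dots> \<le> (real t + 1) / 2 * \<bar>x - y\<bar>" using N by (intro mult_right_mono) auto
  finally show "\<bar>(\<lambda>t. g_step (max 1 t)) t x - (\<lambda>t. g_step (max 1 t)) t y\<bar> \<le> (real t + 1) / 2 * \<bar>x - y\<bar>"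
    by (simp add: N_def)
  have "g_step N = (\<lambda>x. max 0 (min 1 (real N / 2 * (x + 1 / real N))))"
    using g_step_clamp[OF N(1)] by auto
  moreover have "(\<lambda>x. max 0 (min 1 (real N / 2 * (x + 1 / real N)))) \<in> borel_measurable (borel :: real measure)"
    by measurable
  ultimately show "(\<lambda>t. g_step (max 1 t)) t \<in> borel_measurable borel" by (simp add: N_def)
qed

theorem mainTheorem6:
  fixes k :: nat and \<alpha> :: real
  assumes "k \<ge> 2" and "0 < \<alpha>" and "\<alpha> \<le> 1"
  shows "universalizable (market_data k \<alpha>) (ls_returns \<alpha>) (Wk k \<times> Wk k)
           (param_uniform k) (MA k (\<lambda>t. g_line))
       \<and> universalizable (market_data k \<alpha>) (ls_returns \<alpha>) (Wk k \<times> Wk k)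
           (param_uniform k) (MA k (\<lambda>t. g_step (max 1 t)))"
  using main_general[OF assms(1,2) G_line] main_general[OF assms(1,2) G_step] by blast

end
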